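(* Let $\mathbb{A}$, its multiplication, the decomposition $A_3=C\oplus L$ and the complex $\mathbb{B}=\mathbb{B}(\mathbb{A},C)$ be as in the context, and suppose moreover that $\mathbb{A}$ is split exact (i.e. exact including at $A_0$, so $I=R$). Then $\mathbb{B}$ is split exact.
   Context: Let $R$ be a commutative Noetherian ring and let $p\ge 1$, $q\ge 3$ be integers. Let $\mathbb{A}\colon 0\to A_3\xrightarrow{d_3}A_2\xrightarrow{d_2}A_1\xrightarrow{d_1}A_0=R$ be a complex of finitely generated free $R$-modules with $\operatorname{rank}A_1=p+2$, $\operatorname{rank}A_2=p+q$, $\operatorname{rank}A_3=q-1$. Fix a differential graded algebra structure on $\mathbb{A}$: $R$-bilinear products $A_1\times A_1\to A_2$ (alternating: $e\cdot e=0$, $e\cdot e'=-e'\cdot e$) and $A_1\times A_2\to A_3$ satisfying the Leibniz rules $d_2(e\cdot e')=d_1(e)e'-d_1(e')e$ and $d_3(e\cdot f)=d_1(e)f+d_2(f)\cdot e$ for $e,e'\in A_1$, $f\in A_2$. Fix a decomposition $A_3=C\oplus L$ with $C$ free of rank $q-2$ and $L$ free of rank $1$; let $\eta\colon A_3\to L$ be the projection and $\iota\colon C\to A_3$ the inclusion. Define the sequence $\mathbb{B}=\mathbb{B}(\mathbb{A},C)\colon 0\to C\xrightarrow{\delta_4}A_2\xrightarrow{\delta_3}\operatorname{Hom}(A_1,L)\oplus A_1\xrightarrow{\delta_2}\operatorname{Hom}(A_2,L)\xrightarrow{\delta_1}\operatorname{Hom}(C,L)$ by $\delta_4=d_3\circ\iota$;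 $\delta_3(f)=\big(e\mapsto \eta(e\cdot f),\ d_2(f)\big)$; $\delta_2(\varphi,e)=\big(f\mapsto \varphi(d_2f)+\eta(e\cdot f)\big)$; $\delta_1(\psi)=\psi\circ d_3\circ\iota$. *)

theory Defs
  imports "Jordan_Normal_Form.Matrix"
begin

text \<open>Free module of rank n over the commutative ring 'a = carrier_vec n.
  R-linear maps between them are functions on vectors that are linear on the carrier.\<close>

definition ideal_cr :: "'a::comm_ring_1 set \<Rightarrow> bool" where
  "ideal_cr I \<longleftrightarrow> 0 \<in> I \<and> (\<forall>x\<in>I. \<forall>y\<in>I. x + y \<in> I) \<and> (\<forall>r. \<forall>x\<in>I. r * x \<in> I)"

definition noetherian_ring :: "'a::comm_ring_1 itself \<Rightarrow> bool" where
  "noetherian_ring _ \<longleftrightarrow> (\<forall>I::'a set. ideal_cr I \<longrightarrow>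
      (\<exists>G. finite G \<and> G \<subseteq> I \<and> I = {x. \<exists>c. x = (\<Sum>g\<in>G. c g * g)}))"

definition lin_map :: "nat \<Rightarrow> nat \<Rightarrow> ('a::comm_ring_1 vec \<Rightarrow> 'a vec) \<Rightarrow> bool" where
  "lin_map m n f \<longleftrightarrow> (\<forall>v\<in>carrier_vec m. f v \<in> carrier_vec n)
     \<and> (\<forall>u\<in>carrier_vec m. \<forall>v\<in>carrier_vec m. f (u + v) = f u + f v)
     \<and> (\<forall>c. \<forall>v\<in>carrier_vec m. f (c \<cdot>\<^sub>v v) = c \<cdot>\<^sub>v f v)"

definition bilin_map :: "nat \<Rightarrow> nat \<Rightarrow> nat \<Rightarrow> ('a::comm_ring_1 vec \<Rightarrow> 'a vec \<Rightarrow> 'a vec) \<Rightarrow> bool" where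
  "bilin_map m n k f \<longleftrightarrow> (\<forall>u\<in>carrier_vec m. lin_map n k (f u))
     \<and> (\<forall>v\<in>carrier_vec n. lin_map m k (\<lambda>u. f u v))"

text \<open>A bounded complex  0 -> M_k -> ... -> M_1 -> M_0 -> 0  of free modules,
  M_i = carrier_vec (ns!i), with differential fs!i : M_(i+1) -> M_i.
  Exact: exact at every M_i (including both ends, which are bordered by 0).\<close>

definition exact_seq :: "nat list \<Rightarrow> ('a::comm_ring_1 vec \<Rightarrow> 'a vec) list \<Rightarrow> bool" where
  "exact_seq ns fs \<longleftrightarrow> length ns = length fs + 1
     \<and> (\<forall>i<length fs. lin_map (ns!(i+1)) (ns!i) (fs!i))
     \<and> (\<forall>i<length ns. \<forall>v\<in>carrier_vec (ns!i).
          ((i = 0 \<or> (fs!(i-1)) v = 0\<^sub>v (ns!(i-1))) \<longleftrightarrow>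
           (if i < length fs then (\<exists>u\<in>carrier_vec (ns!(i+1)). (fs!i) u = v)
            else v = 0\<^sub>v (ns!i))))"

definition split_exact :: "nat list \<Rightarrow> ('a::comm_ring_1 vec \<Rightarrow> 'a vec) list \<Rightarrow> bool" where
  "split_exact ns fs \<longleftrightarrow> exact_seq ns fs
     \<and> (\<exists>ss. length ss = length fs \<and> (\<forall>i<length fs. lin_map (ns!i) (ns!(i+1)) (ss!i)
            \<and> (\<forall>v\<in>carrier_vec (ns!(i+1)). (fs!i) ((ss!i) ((fs!i) v)) = (fs!i) v)))"

text \<open>L is identified with R via a basis vector lam of L,
  so Hom(X,L) = Hom(X,R) = carrier_vec (rank X) via the dual basis (psi(x) = psi \<bullet> x),
  and the projection eta : A_3 -> L is the 1 x (q-1) matrix eta (coordinate w.r.t. lam).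
  iota : C = R^(q-2) -> A_3 is the inclusion. m12 e f = e \<cdot> f : A_1 x A_2 -> A_3.\<close>

definition eta_of :: "'a::comm_ring_1 mat \<Rightarrow> 'a vec \<Rightarrow> 'a" where
  "eta_of eta v = (eta *\<^sub>v v) $ 0"

definition B_delta4 :: "'a::comm_ring_1 mat \<Rightarrow> 'a mat \<Rightarrow> 'a vec \<Rightarrow> 'a vec" where
  "B_delta4 d3 iota c = d3 *\<^sub>v (iota *\<^sub>v c)"

definition B_delta3 :: "nat \<Rightarrow> 'a::comm_ring_1 mat \<Rightarrow> 'a mat \<Rightarrow> ('a vec \<Rightarrow> 'a vec \<Rightarrow> 'a vec)
    \<Rightarrow> 'a vec \<Rightarrow> 'a vec" where
  "B_delta3 n1 d2 eta m12 f =
     vec n1 (\<lambda>i. eta_of eta (m12 (unit_vec n1 i) f)) @\<^sub>v (d2 *\<^sub>v f)"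

definition B_delta2 :: "nat \<Rightarrow> nat \<Rightarrow> 'a::comm_ring_1 mat \<Rightarrow> 'a mat \<Rightarrow> ('a vec \<Rightarrow> 'a vec \<Rightarrow> 'a vec)
    \<Rightarrow> 'a vec \<Rightarrow> 'a vec" where
  "B_delta2 n1 n2 d2 eta m12 w =
     (let phi = vec_first w n1; e = vec_last w n1 in
      vec n2 (\<lambda>j. phi \<bullet> (d2 *\<^sub>v unit_vec n2 j) + eta_of eta (m12 e (unit_vec n2 j))))"

definition B_delta1 :: "nat \<Rightarrow> 'a::comm_ring_1 mat \<Rightarrow> 'a mat \<Rightarrow> 'a vec \<Rightarrow> 'a vec" where
  "B_delta1 nc d3 iota psi = vec nc (\<lambda>k. psi \<bullet> (d3 *\<^sub>v (iota *\<^sub>v unit_vec nc k)))"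

end

theory Submission
  imports Defs
begin

lemma mat_vec_smult_cr:
  fixes A :: "'a::comm_ring_1 mat"
  assumes "A \<in> carrier_mat m n" "v \<in> carrier_vec n"
  shows "A *\<^sub>v (k \<cdot>\<^sub>v v) = k \<cdot>\<^sub>v (A *\<^sub>v v)"
  using assms by (intro eq_vecI) (auto simp: scalar_prod_smult_distrib[of _ n])

lemma lin_mapD:
  assumes "lin_map m n f"
  shows "\<And>v. v \<in> carrier_vec m \<Longrightarrow> f v \<in> carrier_vec n"
    "\<And>u v. u \<in> carrier_vec m \<Longrightarrow> v \<in> carrier_vec m \<Longrightarrow> f (u + v) = f u + f v"
    "\<And>c v. v \<in> carrier_vec m \<Longrightarrow> f (c \<cdot>\<^sub>v v) = c \<cdot>\<^sub>v f v"
  using assms unfolding lin_map_def by auto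

lemma lin_map_mat:
  fixes A :: "'a::comm_ring_1 mat"
  assumes "A \<in> carrier_mat m n"
  shows "lin_map n m (\<lambda>v. A *\<^sub>v v)"
  using assms unfolding lin_map_def
  by (auto simp: mult_add_distrib_mat_vec mat_vec_smult_cr)

lemma lin_map_zero:
  fixes f :: "'a::comm_ring_1 vec \<Rightarrow> 'a vec"
  assumes "lin_map m n f"
  shows "f (0\<^sub>v m) = 0\<^sub>v n"
proof -
  have "f (0\<^sub>v m) = f (0 \<cdot>\<^sub>v 0\<^sub>v m)" by (rule arg_cong[where f=f]) (intro eq_vecI, auto)
  also have "\<dots> = 0 \<cdot>\<^sub>v f (0\<^sub>v m)" using lin_mapD(3)[OF assms] by simp
  also have "\<dots> = 0\<^sub>v n" using lin_mapD(1)[OF assms, of "0\<^sub>v m"] by (intro eq_vecI) auto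
  finally show ?thesis .
qed

lemma lin_map_minus:
  fixes f :: "'a::comm_ring_1 vec \<Rightarrow> 'a vec"
  assumes "lin_map m n f" "u \<in> carrier_vec m" "v \<in> carrier_vec m"
  shows "f (u - v) = f u - f v"
proof -
  have "u - v = u + (-1) \<cdot>\<^sub>v v" using assms by (intro eq_vecI) auto
  hence "f (u - v) = f u + (-1) \<cdot>\<^sub>v f v" using lin_mapD[OF assms(1)] assms by simp
  also have "\<dots> = f u - f v" using lin_mapD(1)[OF assms(1)] assms by (intro eq_vecI) auto
  finally show ?thesis .
qed

lemma lin_scalar_repr:
  fixes g :: "'a::comm_ring_1 vec \<Rightarrow> 'a"
  assumes add: "\<And>u v. u\<in>carrier_vec n \<Longrightarrow> v\<in>carrier_vec n \<Longrightarrow> g (u+v) = g u + g v"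
    and sm: "\<And>c v. v\<in>carrier_vec n \<Longrightarrow> g (c \<cdot>\<^sub>v v) = c * g v"
    and x: "x \<in> carrier_vec n"
  shows "g x = vec n (\<lambda>i. g (unit_vec n i)) \<bullet> x"
proof -
  have z: "g (0\<^sub>v n) = 0"
  proof -
    have "g (0\<^sub>v n) = g (0 \<cdot>\<^sub>v 0\<^sub>v n)" by (rule arg_cong[where f=g]) (intro eq_vecI, auto)
    also have "\<dots> = 0" using sm[of "0\<^sub>v n" 0] by simp
    finally show ?thesis .
  qed
  have main: "S \<subseteq> {..<n} \<Longrightarrow> g (vec n (\<lambda>i. if i \<in> S then x $ i else 0)) = (\<Sum>i\<in>S. x $ i * g (unit_vec n i))"
    if "finite S" for S
    using that
  proof (induction S rule: finite_induct)
    case empty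
    have "vec n (\<lambda>i. if i \<in> {} then x $ i else 0) = 0\<^sub>v n" by (intro eq_vecI) auto
    then show ?case using z by simp
  next
    case (insert a S)
    have eq: "vec n (\<lambda>i. if i \<in> insert a S then x $ i else 0)
       = vec n (\<lambda>i. if i \<in> S then x $ i else 0) + x $ a \<cdot>\<^sub>v unit_vec n a"
      using insert by (intro eq_vecI) auto
    show ?case using insert by (subst eq, subst add) (auto simp: sm)
  qed
  have "vec n (\<lambda>i. if i \<in> {..<n} then x $ i else 0) = x" using x by (intro eq_vecI) auto
  hence "g x = (\<Sum>i\<in>{..<n}. x $ i * g (unit_vec n i))" using main[of "{..<n}"] by simp
  also have "\<dots> = vec n (\<lambda>i. g (unit_vec n i)) \<bullet> x"
    unfolding scalar_prod_def using x by (auto simp: mult.commute lessThan_atLeast0 intro!: sum.cong)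
  finally show ?thesis .
qed

lemma dual_repr:
  fixes f :: "'a::comm_ring_1 vec \<Rightarrow> 'a vec"
  assumes "lin_map n m f" "psi \<in> carrier_vec m" "x \<in> carrier_vec n"
  shows "vec n (\<lambda>i. psi \<bullet> f (unit_vec n i)) \<bullet> x = psi \<bullet> f x"
  by (rule lin_scalar_repr[symmetric, of n "\<lambda>y. psi \<bullet> f y"])
     (use assms lin_mapD[OF assms(1)] in \<open>auto simp: scalar_prod_add_distrib[of _ m]\<close>)

lemma lin_map_comp:
  assumes "lin_map n m f" "lin_map m k g"
  shows "lin_map n k (\<lambda>x. g (f x))"
  using lin_mapD[OF assms(1)] lin_mapD[OF assms(2)] unfolding lin_map_def by auto

lemma vec_first_append: "a \<in> carrier_vec n \<Longrightarrow> vec_first (a @\<^sub>v b) n = a"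
  unfolding vec_first_def by (intro eq_vecI) auto

lemma vec_last_append: "b \<in> carrier_vec m \<Longrightarrow> vec_last (a @\<^sub>v b) m = b"
  unfolding vec_last_def by (intro eq_vecI) auto

lemma homotopy_split_exact:
  fixes f0 f1 f2 f3 k0 k1 k2 k3 :: "'a::comm_ring_1 vec \<Rightarrow> 'a vec"
  assumes lf0: "lin_map n1 n0 f0" and lf1: "lin_map n2 n1 f1"
    and lf2: "lin_map n3 n2 f2" and lf3: "lin_map n4 n3 f3"
    and lk0: "lin_map n0 n1 k0" and lk1: "lin_map n1 n2 k1"
    and lk2: "lin_map n2 n3 k2" and lk3: "lin_map n3 n4 k3"
    and c1: "\<And>v. v \<in> carrier_vec n2 \<Longrightarrow> f0 (f1 v) = 0\<^sub>v n0"
    and c2: "\<And>v. v \<in> carrier_vec n3 \<Longrightarrow> f1 (f2 v) = 0\<^sub>v n1"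
    and c3: "\<And>v. v \<in> carrier_vec n4 \<Longrightarrow> f2 (f3 v) = 0\<^sub>v n2"
    and h0: "\<And>v. v \<in> carrier_vec n0 \<Longrightarrow> f0 (k0 v) = v"
    and h1: "\<And>v. v \<in> carrier_vec n1 \<Longrightarrow> f1 (k1 v) + k0 (f0 v) = v"
    and h2: "\<And>v. v \<in> carrier_vec n2 \<Longrightarrow> f2 (k2 v) + k1 (f1 v) = v"
    and h3: "\<And>v. v \<in> carrier_vec n3 \<Longrightarrow> f3 (k3 v) + k2 (f2 v) = v"
    and h4: "\<And>v. v \<in> carrier_vec n4 \<Longrightarrow> k3 (f3 v) = v"
  shows "split_exact [n0, n1, n2, n3, n4] [f0, f1, f2, f3]"
proof -
  note F0 = lin_mapD[OF lf0] and F1 = lin_mapD[OF lf1] and F2 = lin_mapD[OF lf2] and F3 = lin_mapD[OF lf3]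
  note K0 = lin_mapD[OF lk0] and K1 = lin_mapD[OF lk1] and K2 = lin_mapD[OF lk2] and K3 = lin_mapD[OF lk3]
  have z0: "k0 (0\<^sub>v n0) = 0\<^sub>v n1" by (rule lin_map_zero[OF lk0])
  have z1: "k1 (0\<^sub>v n1) = 0\<^sub>v n2" by (rule lin_map_zero[OF lk1])
  have z2: "k2 (0\<^sub>v n2) = 0\<^sub>v n3" by (rule lin_map_zero[OF lk2])
  have e1: "v = f1 (k1 v)" if "v \<in> carrier_vec n1" "f0 v = 0\<^sub>v n0" for v
    using h1[OF that(1)] that z0 F1(1)[OF K1(1)[OF that(1)]] by simp
  have e2: "v = f2 (k2 v)" if "v \<in> carrier_vec n2" "f1 v = 0\<^sub>v n1" for v
    using h2[OF that(1)] that z1 F2(1)[OF K2(1)[OF that(1)]] by simp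
  have e3: "v = f3 (k3 v)" if "v \<in> carrier_vec n3" "f2 v = 0\<^sub>v n2" for v
    using h3[OF that(1)] that z2 F3(1)[OF K3(1)[OF that(1)]] by simp
  have e4: "v = 0\<^sub>v n4" if "v \<in> carrier_vec n4" "f3 v = 0\<^sub>v n3" for v
    using h4[OF that(1)] that lin_map_zero[OF lk3] by simp
  have ex: "exact_seq [n0, n1, n2, n3, n4] [f0, f1, f2, f3]"
    unfolding exact_seq_def
  proof (intro conjI allI impI ballI)
    show "length [n0, n1, n2, n3, n4] = length [f0, f1, f2, f3] + 1" by simp
  next
    fix i assume "i < length [f0, f1, f2, f3]"
    hence "i = 0 \<or> i = 1 \<or> i = 2 \<or> i = 3" by auto
    then show "lin_map ([n0, n1, n2, n3, n4] ! (i + 1)) ([n0, n1, n2, n3, n4] ! i) ([f0, f1, f2, f3] ! i)"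
      using lf0 lf1 lf2 lf3 by auto
  next
    fix i and v :: "'a vec" assume i: "i < length [n0, n1, n2, n3, n4]" and v: "v \<in> carrier_vec ([n0, n1, n2, n3, n4] ! i)"
    from i have "i = 0 \<or> i = 1 \<or> i = 2 \<or> i = 3 \<or> i = 4" by auto
    then show "(i = 0 \<or> ([f0, f1, f2, f3] ! (i - 1)) v = 0\<^sub>v ([n0, n1, n2, n3, n4] ! (i - 1))) =
          (if i < length [f0, f1, f2, f3] then \<exists>u\<in>carrier_vec ([n0, n1, n2, n3, n4] ! (i + 1)). ([f0, f1, f2, f3] ! i) u = v
           else v = 0\<^sub>v ([n0, n1, n2, n3, n4] ! i))"
    proof (elim disjE)
      assume "i = 0" thus ?thesis using v h0 K0(1) by auto
    next
      assume "i = 1" thus ?thesis using v e1[symmetric] K1(1) c1 by (auto intro!: bexI[of _ "k1 v"])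
    next
      assume "i = 2" thus ?thesis using v e2[symmetric] K2(1) c2 by (auto intro!: bexI[of _ "k2 v"])
    next
      assume "i = 3" thus ?thesis using v e3[symmetric] K3(1) c3 by (auto intro!: bexI[of _ "k3 v"])
    next
      assume "i = 4" thus ?thesis using v e4 lin_map_zero[OF lf3] by auto
    qed
  qed
  have s0: "f0 (k0 (f0 v)) = f0 v" if "v \<in> carrier_vec n1" for v using h0 F0(1) that by simp
  have s1: "f1 (k1 (f1 v)) = f1 v" if "v \<in> carrier_vec n2" for v
    using e1[OF F1(1)[OF that] c1[OF that]] by simp
  have s2: "f2 (k2 (f2 v)) = f2 v" if "v \<in> carrier_vec n3" for v
    using e2[OF F2(1)[OF that] c2[OF that]] by simp
  have s3: "f3 (k3 (f3 v)) = f3 v" if "v \<in> carrier_vec n4" for v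
    using e3[OF F3(1)[OF that] c3[OF that]] by simp
  have all: "\<forall>i<length [f0, f1, f2, f3]. lin_map ([n0, n1, n2, n3, n4] ! i) ([n0, n1, n2, n3, n4] ! (i + 1)) ([k0, k1, k2, k3] ! i) \<and>
         (\<forall>v\<in>carrier_vec ([n0, n1, n2, n3, n4] ! (i + 1)).
             ([f0, f1, f2, f3] ! i) (([k0, k1, k2, k3] ! i) (([f0, f1, f2, f3] ! i) v)) = ([f0, f1, f2, f3] ! i) v)"
  proof (intro allI impI)
    fix i assume "i < length [f0, f1, f2, f3]"
    hence "i = 0 \<or> i = 1 \<or> i = 2 \<or> i = 3" by auto
    then show "lin_map ([n0, n1, n2, n3, n4] ! i) ([n0, n1, n2, n3, n4] ! (i + 1)) ([k0, k1, k2, k3] ! i) \<and>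
         (\<forall>v\<in>carrier_vec ([n0, n1, n2, n3, n4] ! (i + 1)).
             ([f0, f1, f2, f3] ! i) (([k0, k1, k2, k3] ! i) (([f0, f1, f2, f3] ! i) v)) = ([f0, f1, f2, f3] ! i) v)"
    proof (elim disjE)
      assume "i = 0" thus ?thesis using lk0 s0 by auto
    next
      assume "i = 1" thus ?thesis using lk1 s1 by auto
    next
      assume "i = 2" thus ?thesis using lk2 s2 by auto
    next
      assume "i = 3" thus ?thesis using lk3 s3 by auto
    qed
  qed
  show ?thesis unfolding split_exact_def
    by (rule conjI[OF ex], rule exI[of _ "[k0, k1, k2, k3]"], use all in simp)
qed


locale bsetup =
  fixes n1 n2 n3 nc :: nat
    and d1 d2 d3 :: "'a::comm_ring_1 mat"
    and m11 m12 :: "'a vec \<Rightarrow> 'a vec \<Rightarrow> 'a vec"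
    and iota lam pr eta :: "'a mat"
    and e0 :: "'a vec"
  assumes d1: "d1 \<in> carrier_mat 1 n1"
    and d2: "d2 \<in> carrier_mat n1 n2"
    and d3: "d3 \<in> carrier_mat n2 n3"
    and cplx1: "d1 * d2 = 0\<^sub>m 1 n2"
    and cplx2: "d2 * d3 = 0\<^sub>m n1 n3"
    and m11: "bilin_map n1 n1 n2 m11"
    and m12: "bilin_map n1 n2 n3 m12"
    and alt2: "\<forall>e\<in>carrier_vec n1. \<forall>e'\<in>carrier_vec n1. m11 e e' = - m11 e' e"
    and leib1: "\<forall>e\<in>carrier_vec n1. \<forall>e'\<in>carrier_vec n1.
       d2 *\<^sub>v m11 e e' = ((d1 *\<^sub>v e) $ 0) \<cdot>\<^sub>v e' - ((d1 *\<^sub>v e') $ 0) \<cdot>\<^sub>v e"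
    and leib2: "\<forall>e\<in>carrier_vec n1. \<forall>f\<in>carrier_vec n2.
       d3 *\<^sub>v m12 e f = ((d1 *\<^sub>v e) $ 0) \<cdot>\<^sub>v f + m11 (d2 *\<^sub>v f) e"
    and iota: "iota \<in> carrier_mat n3 nc"
    and lam: "lam \<in> carrier_mat n3 1"
    and pr: "pr \<in> carrier_mat nc n3"
    and eta: "eta \<in> carrier_mat 1 n3"
    and dec1: "pr * iota = 1\<^sub>m nc"
    and dec2: "eta * lam = 1\<^sub>m 1"
    and dec4: "eta * iota = 0\<^sub>m 1 nc"
    and dec5: "iota * pr + lam * eta = 1\<^sub>m n3"
    and e0: "e0 \<in> carrier_vec n1"
    and d1e0: "(d1 *\<^sub>v e0) $ 0 = 1"
    and inj: "\<forall>x\<in>carrier_vec n3. d3 *\<^sub>v x = 0\<^sub>v n2 \<longrightarrow> x = 0\<^sub>v n3"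
begin

abbreviation "E \<equiv> eta_of eta"
definition "lamv = lam *\<^sub>v unit_vec 1 0"
definition "D = d3 *\<^sub>v lamv"

lemma lamv_c[simp]: "lamv \<in> carrier_vec n3" unfolding lamv_def using lam by auto
lemma D_c[simp]: "D \<in> carrier_vec n2" unfolding D_def using d3 by auto

lemma dims[simp]: "dim_row d1 = 1" "dim_col d1 = n1" "dim_row d2 = n1" "dim_col d2 = n2"
  "dim_row d3 = n2" "dim_col d3 = n3" "dim_row iota = n3" "dim_col iota = nc"
  "dim_row lam = n3" "dim_col lam = 1" "dim_row pr = nc" "dim_col pr = n3"
  "dim_row eta = 1" "dim_col eta = n3"
  using d1 d2 d3 iota lam pr eta by auto

lemma mats[simp]: "d1 \<in> carrier_mat 1 n1" "d2 \<in> carrier_mat n1 n2" "d3 \<in> carrier_mat n2 n3"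
  "iota \<in> carrier_mat n3 nc" "lam \<in> carrier_mat n3 1" "pr \<in> carrier_mat nc n3" "eta \<in> carrier_mat 1 n3"
  "e0 \<in> carrier_vec n1"
  using d1 d2 d3 iota lam pr eta e0 by auto

lemma mv_c[simp]:
  "v \<in> carrier_vec n1 \<Longrightarrow> d1 *\<^sub>v v \<in> carrier_vec 1"
  "v \<in> carrier_vec n2 \<Longrightarrow> d2 *\<^sub>v v \<in> carrier_vec n1"
  "v \<in> carrier_vec n3 \<Longrightarrow> d3 *\<^sub>v v \<in> carrier_vec n2"
  "v \<in> carrier_vec nc \<Longrightarrow> iota *\<^sub>v v \<in> carrier_vec n3"
  "v \<in> carrier_vec n3 \<Longrightarrow> pr *\<^sub>v v \<in> carrier_vec nc"
  "v \<in> carrier_vec n3 \<Longrightarrow> eta *\<^sub>v v \<in> carrier_vec 1"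
  "v \<in> carrier_vec 1 \<Longrightarrow> lam *\<^sub>v v \<in> carrier_vec n3"
  by (rule mult_mat_vec_carrier[OF d1], assumption, rule mult_mat_vec_carrier[OF d2], assumption,
      rule mult_mat_vec_carrier[OF d3], assumption, rule mult_mat_vec_carrier[OF iota], assumption,
      rule mult_mat_vec_carrier[OF pr], assumption, rule mult_mat_vec_carrier[OF eta], assumption,
      rule mult_mat_vec_carrier[OF lam], assumption)

lemma E_row: "E v = row eta 0 \<bullet> v" unfolding eta_of_def using eta by auto
lemma etar[simp]: "row eta 0 \<in> carrier_vec n3" using eta by (simp add: carrier_vecI)

lemma E_add: "u \<in> carrier_vec n3 \<Longrightarrow> v \<in> carrier_vec n3 \<Longrightarrow> E (u + v) = E u + E v"
  unfolding E_row using eta by (simp add: scalar_prod_add_distrib[of _ n3])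

lemma E_smult: "v \<in> carrier_vec n3 \<Longrightarrow> E (c \<cdot>\<^sub>v v) = c * E v"
  unfolding E_row using eta by (simp add: scalar_prod_smult_distrib[of _ n3])

lemma E_zero: "E (0\<^sub>v n3) = 0"
  unfolding E_row using eta by simp

lemma E_lamv: "E lamv = 1"
proof -
  have "eta *\<^sub>v lamv = (eta * lam) *\<^sub>v unit_vec 1 0" unfolding lamv_def using assoc_mult_mat_vec[OF eta lam, of "unit_vec 1 0"] by simp
  thus ?thesis unfolding eta_of_def dec2 by simp
qed

lemma E_iota: "c \<in> carrier_vec nc \<Longrightarrow> E (iota *\<^sub>v c) = 0"
proof -
  assume c: "c \<in> carrier_vec nc"
  have "eta *\<^sub>v (iota *\<^sub>v c) = (eta * iota) *\<^sub>v c" using assoc_mult_mat_vec[OF eta iota c] by simp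
  thus ?thesis unfolding eta_of_def dec4 using c by simp
qed

lemma decomp: assumes y: "y \<in> carrier_vec n3"
  shows "y = iota *\<^sub>v (pr *\<^sub>v y) + E y \<cdot>\<^sub>v lamv"
proof -
  have c1: "iota * pr \<in> carrier_mat n3 n3" using mult_carrier_mat[OF iota pr] .
  have c2: "lam * eta \<in> carrier_mat n3 n3" using mult_carrier_mat[OF lam eta] .
  have "y = 1\<^sub>m n3 *\<^sub>v y" using one_mult_mat_vec[OF y] by simp
  also have "\<dots> = (iota * pr + lam * eta) *\<^sub>v y" by (simp only: dec5)
  also have "\<dots> = (iota * pr) *\<^sub>v y + (lam * eta) *\<^sub>v y"
    by (rule add_mult_distrib_mat_vec[OF c1 c2 y])
  also have "(lam * eta) *\<^sub>v y = lam *\<^sub>v (eta *\<^sub>v y)" using assoc_mult_mat_vec[OF lam eta y] .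
  also have "eta *\<^sub>v y = E y \<cdot>\<^sub>v unit_vec 1 0" unfolding eta_of_def
    by (intro eq_vecI) auto
  also have "lam *\<^sub>v (E y \<cdot>\<^sub>v unit_vec 1 0) = E y \<cdot>\<^sub>v lamv" unfolding lamv_def
    by (rule mat_vec_smult_cr[OF lam]) simp
  also have "(iota * pr) *\<^sub>v y = iota *\<^sub>v (pr *\<^sub>v y)" using assoc_mult_mat_vec[OF iota pr y] .
  finally show ?thesis .
qed

lemma L11a: "u \<in> carrier_vec n1 \<Longrightarrow> lin_map n1 n2 (m11 u)" using m11 unfolding bilin_map_def by auto
lemma L11b: "v \<in> carrier_vec n1 \<Longrightarrow> lin_map n1 n2 (\<lambda>u. m11 u v)" using m11 unfolding bilin_map_def by auto
lemma L12a: "u \<in> carrier_vec n1 \<Longrightarrow> lin_map n2 n3 (m12 u)" using m12 unfolding bilin_map_def by auto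
lemma L12b: "v \<in> carrier_vec n2 \<Longrightarrow> lin_map n1 n3 (\<lambda>u. m12 u v)" using m12 unfolding bilin_map_def by auto

lemma m11_c[simp]: "u \<in> carrier_vec n1 \<Longrightarrow> v \<in> carrier_vec n1 \<Longrightarrow> m11 u v \<in> carrier_vec n2"
  using lin_mapD(1)[OF L11a] by auto
lemma m12_c[simp]: "u \<in> carrier_vec n1 \<Longrightarrow> v \<in> carrier_vec n2 \<Longrightarrow> m12 u v \<in> carrier_vec n3"
  using lin_mapD(1)[OF L12a] by auto

lemma m_dims[simp]: "u \<in> carrier_vec n1 \<Longrightarrow> v \<in> carrier_vec n1 \<Longrightarrow> dim_vec (m11 u v) = n2"
  "u \<in> carrier_vec n1 \<Longrightarrow> w \<in> carrier_vec n2 \<Longrightarrow> dim_vec (m12 u w) = n3"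
  "dim_vec D = n2" "dim_vec lamv = n3" "dim_vec e0 = n1"
  using m11_c[of u v] m12_c[of u w] D_c lamv_c e0 by auto

lemma vec_eq_of_minus: fixes a b :: "'a vec" assumes "a \<in> carrier_vec n" "b \<in> carrier_vec n" "a - b = 0\<^sub>v n"
  shows "a = b"
proof -
  have da: "dim_vec a = n" and db: "dim_vec b = n" using assms(1,2) by auto
  show ?thesis
  proof (rule eq_vecI)
    fix i assume i: "i < dim_vec b"
    have 1: "(a - b) $ i = (0\<^sub>v n) $ i" using assms(3) by (rule arg_cong)
    have 2: "(0\<^sub>v n) $ i = 0" using i db by (simp only: index_zero_vec(1))
    have 3: "(a - b) $ i = a $ i - b $ i" using i by (rule index_minus_vec(1))
    have "a $ i - b $ i = 0" using 1 2 3 by (metis (no_types))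
    thus "a $ i = b $ i" by (metis eq_iff_diff_eq_0)
  next
    show "dim_vec a = dim_vec b" using da db by (rule trans[OF _ sym])
  qed
qed

lemma injD: assumes "x \<in> carrier_vec n3" "y \<in> carrier_vec n3" "d3 *\<^sub>v x = d3 *\<^sub>v y" shows "x = y"
proof -
  have "d3 *\<^sub>v (x - y) = d3 *\<^sub>v x - d3 *\<^sub>v y" using assms(1,2) d3
    by (simp add: mult_minus_distrib_mat_vec[of _ n2 n3])
  also have "\<dots> = 0\<^sub>v n2" unfolding assms(3) using assms(2) by (intro eq_vecI) auto
  finally have "d3 *\<^sub>v (x - y) = 0\<^sub>v n2" .
  hence "x - y = 0\<^sub>v n3" using inj assms by auto
  thus ?thesis using vec_eq_of_minus assms by blast
qed

lemma d2d3: "x \<in> carrier_vec n3 \<Longrightarrow> d2 *\<^sub>v (d3 *\<^sub>v x) = 0\<^sub>v n1"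
proof -
  assume x: "x \<in> carrier_vec n3"
  have "d2 *\<^sub>v (d3 *\<^sub>v x) = (d2 * d3) *\<^sub>v x" using assoc_mult_mat_vec[OF d2 d3 x] by simp
  thus ?thesis unfolding cplx2 using x by simp (intro eq_vecI, auto)
qed

lemma d1d2: "x \<in> carrier_vec n2 \<Longrightarrow> (d1 *\<^sub>v (d2 *\<^sub>v x)) $ 0 = 0"
proof -
  assume x: "x \<in> carrier_vec n2"
  have "d1 *\<^sub>v (d2 *\<^sub>v x) = (d1 * d2) *\<^sub>v x" using assoc_mult_mat_vec[OF d1 d2 x] by simp
  thus ?thesis unfolding cplx1 using x by simp
qed

lemma P1: assumes e: "e \<in> carrier_vec n1" and x: "x \<in> carrier_vec n3"
  shows "m12 e (d3 *\<^sub>v x) = (d1 *\<^sub>v e) $ 0 \<cdot>\<^sub>v x"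
proof (rule injD)
  have "d3 *\<^sub>v m12 e (d3 *\<^sub>v x) = (d1 *\<^sub>v e) $ 0 \<cdot>\<^sub>v (d3 *\<^sub>v x) + m11 (d2 *\<^sub>v (d3 *\<^sub>v x)) e"
    using leib2 e x by simp
  also have "m11 (d2 *\<^sub>v (d3 *\<^sub>v x)) e = 0\<^sub>v n2" using d2d3[OF x] lin_map_zero[OF L11b[OF e]] by simp
  finally show "d3 *\<^sub>v m12 e (d3 *\<^sub>v x) = d3 *\<^sub>v ((d1 *\<^sub>v e) $ 0 \<cdot>\<^sub>v x)"
    using x by (simp add: mat_vec_smult_cr[of _ n2 n3])
qed (use e x in auto)

lemma P2: assumes f: "f \<in> carrier_vec n2" and g: "g \<in> carrier_vec n2"
  shows "m12 (d2 *\<^sub>v g) f + m12 (d2 *\<^sub>v f) g = 0\<^sub>v n3"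
proof (rule injD)
  have g2: "d2 *\<^sub>v g \<in> carrier_vec n1" and f2: "d2 *\<^sub>v f \<in> carrier_vec n1" using f g by auto
  have a: "d3 *\<^sub>v m12 (d2 *\<^sub>v g) f = 0 \<cdot>\<^sub>v f + m11 (d2 *\<^sub>v f) (d2 *\<^sub>v g)"
    using leib2 g2 f d1d2[OF g] by simp
  have b: "d3 *\<^sub>v m12 (d2 *\<^sub>v f) g = 0 \<cdot>\<^sub>v g + m11 (d2 *\<^sub>v g) (d2 *\<^sub>v f)"
    using leib2 f2 g d1d2[OF f] by simp
  have c: "m11 (d2 *\<^sub>v g) (d2 *\<^sub>v f) = - m11 (d2 *\<^sub>v f) (d2 *\<^sub>v g)" using alt2 f2 g2 by blast
  show "d3 *\<^sub>v (m12 (d2 *\<^sub>v g) f + m12 (d2 *\<^sub>v f) g) = d3 *\<^sub>v 0\<^sub>v n3"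
    using f g f2 g2 by (simp add: mult_add_distrib_mat_vec[of _ n2 n3] a b c) (intro eq_vecI, auto)
qed (use f g in auto)

lemma H1: "e \<in> carrier_vec n1 \<Longrightarrow> d2 *\<^sub>v m11 e0 e = e - (d1 *\<^sub>v e) $ 0 \<cdot>\<^sub>v e0"
  using leib1 e0 d1e0 by simp

lemma H2: assumes f: "f \<in> carrier_vec n2" shows "d3 *\<^sub>v m12 e0 f = f - m11 e0 (d2 *\<^sub>v f)"
proof -
  have "d3 *\<^sub>v m12 e0 f = 1 \<cdot>\<^sub>v f + m11 (d2 *\<^sub>v f) e0" using leib2 e0 f d1e0 by simp
  also have "m11 (d2 *\<^sub>v f) e0 = - m11 e0 (d2 *\<^sub>v f)" using alt2 e0 mv_c(2)[OF f] by blast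
  finally show ?thesis using f e0 by simp (intro eq_vecI, auto)
qed

lemma H3: "x \<in> carrier_vec n3 \<Longrightarrow> m12 e0 (d3 *\<^sub>v x) = x"
  using P1[OF e0] d1e0 by simp

lemma P3: assumes e: "e \<in> carrier_vec n1" and x: "x \<in> carrier_vec n1"
  shows "m12 e (m11 e0 x) + m12 x (m11 e0 e) = 0\<^sub>v n3"
proof (rule injD)
  let ?a = "(d1 *\<^sub>v e) $ 0" and ?b = "(d1 *\<^sub>v x) $ 0"
  have m1: "m11 (x - ?b \<cdot>\<^sub>v e0) e = m11 x e - ?b \<cdot>\<^sub>v m11 e0 e"
    using lin_map_minus[OF L11b[OF e], of x "?b \<cdot>\<^sub>v e0"] lin_mapD(3)[OF L11b[OF e]] x e0 by simp
  have m2: "m11 (e - ?a \<cdot>\<^sub>v e0) x = m11 e x - ?a \<cdot>\<^sub>v m11 e0 x"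
    using lin_map_minus[OF L11b[OF x], of e "?a \<cdot>\<^sub>v e0"] lin_mapD(3)[OF L11b[OF x]] e e0 by simp
  have A: "d3 *\<^sub>v m12 e (m11 e0 x) = ?a \<cdot>\<^sub>v m11 e0 x + (m11 x e - ?b \<cdot>\<^sub>v m11 e0 e)"
    using leib2 e x e0 H1[OF x] m1 by simp
  have B: "d3 *\<^sub>v m12 x (m11 e0 e) = ?b \<cdot>\<^sub>v m11 e0 e + (m11 e x - ?a \<cdot>\<^sub>v m11 e0 x)"
    using leib2 e x e0 H1[OF e] m2 by simp
  have C: "m11 e x = - m11 x e" using alt2 e x by blast
  show "d3 *\<^sub>v (m12 e (m11 e0 x) + m12 x (m11 e0 e)) = d3 *\<^sub>v 0\<^sub>v n3"
    using e x e0 by (simp add: mult_add_distrib_mat_vec[of _ n2 n3] A B C) (intro eq_vecI, auto simp: algebra_simps)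
qed (use e x e0 in auto)

lemma KEY: assumes f: "f \<in> carrier_vec n2"
  shows "m11 e0 (d2 *\<^sub>v f) + E (m12 e0 f) \<cdot>\<^sub>v D + d3 *\<^sub>v (iota *\<^sub>v (pr *\<^sub>v m12 e0 f)) = f"
proof -
  let ?y = "m12 e0 f"
  have y: "?y \<in> carrier_vec n3" using f e0 by simp
  have "d3 *\<^sub>v ?y = d3 *\<^sub>v (iota *\<^sub>v (pr *\<^sub>v ?y) + E ?y \<cdot>\<^sub>v lamv)" using decomp[OF y] by simp
  also have "\<dots> = d3 *\<^sub>v (iota *\<^sub>v (pr *\<^sub>v ?y)) + E ?y \<cdot>\<^sub>v D"
    unfolding D_def using y by (simp add: mult_add_distrib_mat_vec[of _ n2 n3] mat_vec_smult_cr[of _ n2 n3])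
  finally have "f - m11 e0 (d2 *\<^sub>v f) = d3 *\<^sub>v (iota *\<^sub>v (pr *\<^sub>v ?y)) + E ?y \<cdot>\<^sub>v D"
    using H2[OF f] by simp
  then show ?thesis
  proof -
    assume h: "f - m11 e0 (d2 *\<^sub>v f) = d3 *\<^sub>v (iota *\<^sub>v (pr *\<^sub>v ?y)) + E ?y \<cdot>\<^sub>v D"
    show ?thesis
    proof (rule eq_vecI)
      fix i assume i: "i < dim_vec f"
      have "(f - m11 e0 (d2 *\<^sub>v f)) $ i = (d3 *\<^sub>v (iota *\<^sub>v (pr *\<^sub>v ?y)) + E ?y \<cdot>\<^sub>v D) $ i" using h by simp
      thus "(m11 e0 (d2 *\<^sub>v f) + E ?y \<cdot>\<^sub>v D + d3 *\<^sub>v (iota *\<^sub>v (pr *\<^sub>v ?y))) $ i = f $ i"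
        using i f e0 by (simp add: algebra_simps)
    qed (use f e0 in simp)
  qed
qed

end

context bsetup
begin

definition "k1 chi = vec n2 (\<lambda>j. chi \<bullet> (pr *\<^sub>v m12 e0 (unit_vec n2 j)))"
definition "k2 psi = vec n1 (\<lambda>i. psi \<bullet> m11 e0 (unit_vec n1 i)) @\<^sub>v ((psi \<bullet> D) \<cdot>\<^sub>v e0)"
definition "k3 w = m11 e0 (vec_last w n1) + (vec_first w n1 \<bullet> e0) \<cdot>\<^sub>v D"
definition "k4 f = pr *\<^sub>v m12 e0 f"

abbreviation "del1 \<equiv> B_delta1 nc d3 iota"
abbreviation "del2 \<equiv> B_delta2 n1 n2 d2 eta m12"
abbreviation "del3 \<equiv> B_delta3 n1 d2 eta m12"
abbreviation "del4 \<equiv> B_delta4 d3 iota"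

lemma lin_d3i: "lin_map nc n2 (\<lambda>c. d3 *\<^sub>v (iota *\<^sub>v c))"
  by (rule lin_map_comp[OF lin_map_mat[OF iota] lin_map_mat[OF d3]])

lemma lin_k4: "lin_map n2 nc k4"
  unfolding k4_def[abs_def] by (rule lin_map_comp[OF L12a[OF e0] lin_map_mat[OF pr]])

lemma R_del1: "psi \<in> carrier_vec n2 \<Longrightarrow> c \<in> carrier_vec nc \<Longrightarrow> del1 psi \<bullet> c = psi \<bullet> (d3 *\<^sub>v (iota *\<^sub>v c))"
  unfolding B_delta1_def by (rule dual_repr[OF lin_d3i])

lemma R_k1: "chi \<in> carrier_vec nc \<Longrightarrow> y \<in> carrier_vec n2 \<Longrightarrow> k1 chi \<bullet> y = chi \<bullet> k4 y"
  unfolding k1_def k4_def by (rule dual_repr[OF lin_k4[unfolded k4_def]])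

lemma R_k2a: "psi \<in> carrier_vec n2 \<Longrightarrow> x \<in> carrier_vec n1 \<Longrightarrow>
   vec n1 (\<lambda>i. psi \<bullet> m11 e0 (unit_vec n1 i)) \<bullet> x = psi \<bullet> m11 e0 x"
  by (rule dual_repr[OF L11a[OF e0]])

lemma R_del3a: "f \<in> carrier_vec n2 \<Longrightarrow> x \<in> carrier_vec n1 \<Longrightarrow>
   vec n1 (\<lambda>i. E (m12 (unit_vec n1 i) f)) \<bullet> x = E (m12 x f)"
  unfolding E_row by (rule dual_repr[OF L12b]) auto

lemma del2_idx: "j < n2 \<Longrightarrow> del2 w $ j = vec_first w n1 \<bullet> (d2 *\<^sub>v unit_vec n2 j) + E (m12 (vec_last w n1) (unit_vec n2 j))"
  unfolding B_delta2_def Let_def by simp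

lemma R_del2: assumes w: "w \<in> carrier_vec (n1+n1)" and g: "g \<in> carrier_vec n2"
  shows "del2 w \<bullet> g = vec_first w n1 \<bullet> (d2 *\<^sub>v g) + E (m12 (vec_last w n1) g)"
proof -
  let ?h = "\<lambda>g. vec_first w n1 \<bullet> (d2 *\<^sub>v g) + E (m12 (vec_last w n1) g)"
  have "?h g = vec n2 (\<lambda>j. ?h (unit_vec n2 j)) \<bullet> g"
  proof (rule lin_scalar_repr[OF _ _ g])
    fix u v :: "'a vec" assume u: "u \<in> carrier_vec n2" and v: "v \<in> carrier_vec n2"
    show "?h (u + v) = ?h u + ?h v"
      using u v lin_mapD(2)[OF L12a[of "vec_last w n1"]]
      by (simp add: mult_add_distrib_mat_vec[OF d2] scalar_prod_add_distrib[of _ n1] E_add algebra_simps)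
  next
    fix c and v :: "'a vec" assume v: "v \<in> carrier_vec n2"
    show "?h (c \<cdot>\<^sub>v v) = c * ?h v"
      using v lin_mapD(3)[OF L12a[of "vec_last w n1"]]
      by (simp add: mat_vec_smult_cr[OF d2] E_smult algebra_simps)
  qed
  moreover have "del2 w = vec n2 (\<lambda>j. ?h (unit_vec n2 j))"
    unfolding B_delta2_def Let_def by simp
  ultimately show ?thesis by simp
qed

lemma del3_first: "vec_first (del3 f) n1 = vec n1 (\<lambda>i. E (m12 (unit_vec n1 i) f))"
  unfolding B_delta3_def by (rule vec_first_append) simp

lemma del3_last: "f \<in> carrier_vec n2 \<Longrightarrow> vec_last (del3 f) n1 = d2 *\<^sub>v f"
  unfolding B_delta3_def by (rule vec_last_append) simp

lemma k2_first: "vec_first (k2 psi) n1 = vec n1 (\<lambda>i. psi \<bullet> m11 e0 (unit_vec n1 i))"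
  unfolding k2_def by (rule vec_first_append) simp

lemma k2_last: "vec_last (k2 psi) n1 = (psi \<bullet> D) \<cdot>\<^sub>v e0"
  unfolding k2_def by (rule vec_last_append) simp

lemma carriers[simp]:
  "del1 psi \<in> carrier_vec nc"
  "del2 w \<in> carrier_vec n2"
  "f \<in> carrier_vec n2 \<Longrightarrow> del3 f \<in> carrier_vec (n1+n1)"
  "c \<in> carrier_vec nc \<Longrightarrow> del4 c \<in> carrier_vec n2"
  "k1 chi \<in> carrier_vec n2"
  "k2 psi \<in> carrier_vec (n1+n1)"
  "k3 w \<in> carrier_vec n2"
  "f \<in> carrier_vec n2 \<Longrightarrow> k4 f \<in> carrier_vec nc"
proof -
  show "del1 psi \<in> carrier_vec nc" unfolding B_delta1_def by simp
  show "del2 w \<in> carrier_vec n2" unfolding B_delta2_def Let_def by simp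
  show "f \<in> carrier_vec n2 \<Longrightarrow> del3 f \<in> carrier_vec (n1+n1)" unfolding B_delta3_def
    by (intro append_carrier_vec) auto
  show "c \<in> carrier_vec nc \<Longrightarrow> del4 c \<in> carrier_vec n2" unfolding B_delta4_def by simp
  show "k1 chi \<in> carrier_vec n2" unfolding k1_def by simp
  show "k2 psi \<in> carrier_vec (n1+n1)" unfolding k2_def by (intro append_carrier_vec) auto
  show "k3 w \<in> carrier_vec n2" unfolding k3_def by (intro add_carrier_vec) auto
  show "f \<in> carrier_vec n2 \<Longrightarrow> k4 f \<in> carrier_vec nc" unfolding k4_def by simp
qed


lemma dims2[simp]: "dim_vec (del1 psi) = nc" "dim_vec (del2 w) = n2" "dim_vec (k1 chi) = n2"
  "dim_vec (k2 psi) = n1 + n1" "dim_vec (k3 w) = n2"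
  by (rule carrier_vecD[OF carriers(1)], rule carrier_vecD[OF carriers(2)], rule carrier_vecD[OF carriers(5)],
      rule carrier_vecD[OF carriers(6)], rule carrier_vecD[OF carriers(7)])

lemma K0: assumes chi: "chi \<in> carrier_vec nc" shows "del1 (k1 chi) = chi"
proof (rule eq_vecI)
  fix k assume "k < dim_vec chi"
  hence k: "k < nc" using chi by auto
  have u: "unit_vec nc k \<in> carrier_vec nc" by simp
  have "del1 (k1 chi) $ k = k1 chi \<bullet> (d3 *\<^sub>v (iota *\<^sub>v unit_vec nc k))" unfolding B_delta1_def using k by simp
  also have "\<dots> = chi \<bullet> (pr *\<^sub>v m12 e0 (d3 *\<^sub>v (iota *\<^sub>v unit_vec nc k)))"
    using R_k1[OF chi, of "d3 *\<^sub>v (iota *\<^sub>v unit_vec nc k)"] u unfolding k4_def by simp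
  also have "m12 e0 (d3 *\<^sub>v (iota *\<^sub>v unit_vec nc k)) = iota *\<^sub>v unit_vec nc k" using H3 u by simp
  also have "pr *\<^sub>v (iota *\<^sub>v unit_vec nc k) = (pr * iota) *\<^sub>v unit_vec nc k"
    using assoc_mult_mat_vec[OF pr iota u] by simp
  also have "\<dots> = unit_vec nc k" unfolding dec1 using u by simp
  finally show "del1 (k1 chi) $ k = chi $ k" using k by simp
qed (use chi in auto)

lemma K4: assumes c: "c \<in> carrier_vec nc" shows "k4 (del4 c) = c"
proof -
  have "k4 (del4 c) = pr *\<^sub>v (iota *\<^sub>v c)" unfolding k4_def B_delta4_def using H3 c by simp
  also have "\<dots> = (pr * iota) *\<^sub>v c" using assoc_mult_mat_vec[OF pr iota c] by simp
  also have "\<dots> = c" unfolding dec1 using c by simp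
  finally show ?thesis .
qed

lemma K1: assumes psi: "psi \<in> carrier_vec n2" shows "del2 (k2 psi) + k1 (del1 psi) = psi"
proof (rule eq_vecI)
  fix j assume "j < dim_vec psi"
  hence j: "j < n2" using psi by auto
  define g where "g = (unit_vec n2 j :: 'a vec)"
  have g: "g \<in> carrier_vec n2" unfolding g_def by simp
  let ?y = "m12 e0 g"
  have y: "?y \<in> carrier_vec n3" using g by simp
  have a: "del2 (k2 psi) $ j = psi \<bullet> m11 e0 (d2 *\<^sub>v g) + (psi \<bullet> D) * E ?y"
  proof -
    have "del2 (k2 psi) $ j = vec_first (k2 psi) n1 \<bullet> (d2 *\<^sub>v g) + E (m12 (vec_last (k2 psi) n1) g)"
      using del2_idx[OF j] unfolding g_def .
    also have "vec_first (k2 psi) n1 \<bullet> (d2 *\<^sub>v g) = psi \<bullet> m11 e0 (d2 *\<^sub>v g)"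
      unfolding k2_first using R_k2a[OF psi] g by simp
    also have "m12 (vec_last (k2 psi) n1) g = (psi \<bullet> D) \<cdot>\<^sub>v ?y"
      unfolding k2_last using lin_mapD(3)[OF L12b[OF g]] by simp
    also have "E ((psi \<bullet> D) \<cdot>\<^sub>v ?y) = (psi \<bullet> D) * E ?y" using E_smult y by simp
    finally show ?thesis .
  qed
  have b: "k1 (del1 psi) $ j = psi \<bullet> (d3 *\<^sub>v (iota *\<^sub>v (pr *\<^sub>v ?y)))"
  proof -
    have "k1 (del1 psi) $ j = del1 psi \<bullet> (pr *\<^sub>v ?y)" unfolding k1_def g_def using j by simp
    also have "\<dots> = psi \<bullet> (d3 *\<^sub>v (iota *\<^sub>v (pr *\<^sub>v ?y)))" using R_del1[OF psi] y by simp
    finally show ?thesis .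
  qed
  have "psi $ j = psi \<bullet> g" unfolding g_def using j by simp
  also have "g = m11 e0 (d2 *\<^sub>v g) + E ?y \<cdot>\<^sub>v D + d3 *\<^sub>v (iota *\<^sub>v (pr *\<^sub>v ?y))" using KEY[OF g] by simp
  also have "psi \<bullet> \<dots> = psi \<bullet> m11 e0 (d2 *\<^sub>v g) + E ?y * (psi \<bullet> D) + psi \<bullet> (d3 *\<^sub>v (iota *\<^sub>v (pr *\<^sub>v ?y)))"
    using psi g y by (simp add: scalar_prod_add_distrib[of _ n2])
  finally have "psi $ j = psi \<bullet> m11 e0 (d2 *\<^sub>v g) + E ?y * (psi \<bullet> D) + psi \<bullet> (d3 *\<^sub>v (iota *\<^sub>v (pr *\<^sub>v ?y)))" .
  then show "(del2 (k2 psi) + k1 (del1 psi)) $ j = psi $ j"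
    using a b j by (simp add: algebra_simps)
qed (use psi in auto)

lemma K3: assumes f: "f \<in> carrier_vec n2" shows "del4 (k4 f) + k3 (del3 f) = f"
proof -
  have "vec_first (del3 f) n1 \<bullet> e0 = E (m12 e0 f)" unfolding del3_first using R_del3a[OF f e0] .
  hence "k3 (del3 f) = m11 e0 (d2 *\<^sub>v f) + E (m12 e0 f) \<cdot>\<^sub>v D" unfolding k3_def del3_last[OF f] by simp
  moreover have "del4 (k4 f) = d3 *\<^sub>v (iota *\<^sub>v (pr *\<^sub>v m12 e0 f))" unfolding B_delta4_def k4_def by simp
  ultimately have eq: "del4 (k4 f) + k3 (del3 f) = d3 *\<^sub>v (iota *\<^sub>v (pr *\<^sub>v m12 e0 f)) + (m11 e0 (d2 *\<^sub>v f) + E (m12 e0 f) \<cdot>\<^sub>v D)"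
    by simp
  have "\<dots> = m11 e0 (d2 *\<^sub>v f) + E (m12 e0 f) \<cdot>\<^sub>v D + d3 *\<^sub>v (iota *\<^sub>v (pr *\<^sub>v m12 e0 f))"
    using f by (intro eq_vecI) (auto simp: algebra_simps)
  also have "\<dots> = f" by (rule KEY[OF f])
  finally show ?thesis using eq by simp
qed

lemma ring_aux: "((a::'a) + p * c) + (x - c * p + b) = x + (b + a)"
  by (simp add: algebra_simps)

lemma K2: assumes w: "w \<in> carrier_vec (n1+n1)" shows "del3 (k3 w) + k2 (del2 w) = w"
proof -
  define phi where "phi = vec_first w n1"
  define e where "e = vec_last w n1"
  have phi: "phi \<in> carrier_vec n1" and e: "e \<in> carrier_vec n1" unfolding phi_def e_def by auto
  define f where "f = k3 w"
  define psi where "psi = del2 w"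
  have f: "f \<in> carrier_vec n2" and psi: "psi \<in> carrier_vec n2" unfolding f_def psi_def by auto
  have fdef: "f = m11 e0 e + (phi \<bullet> e0) \<cdot>\<^sub>v D" unfolding f_def k3_def phi_def e_def ..
  have wapp: "w = phi @\<^sub>v e" unfolding phi_def e_def using w by simp
  have d2D: "d2 *\<^sub>v D = 0\<^sub>v n1" unfolding D_def using d2d3 by simp
  have m12D: "m12 x D = (d1 *\<^sub>v x) $ 0 \<cdot>\<^sub>v lamv" if "x \<in> carrier_vec n1" for x
    unfolding D_def using P1[OF that] by simp
  have psiD: "psi \<bullet> D = (d1 *\<^sub>v e) $ 0"
  proof -
    have "psi \<bullet> D = phi \<bullet> (d2 *\<^sub>v D) + E (m12 e D)" unfolding psi_def phi_def e_def using R_del2[OF w] by simp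
    also have "\<dots> = (d1 *\<^sub>v e) $ 0" unfolding d2D m12D[OF e] using phi E_smult E_lamv by simp
    finally show ?thesis .
  qed
  define A where "A = vec n1 (\<lambda>i. E (m12 (unit_vec n1 i) f))"
  define B where "B = vec n1 (\<lambda>i. psi \<bullet> m11 e0 (unit_vec n1 i))"
  have "del3 f = A @\<^sub>v (d2 *\<^sub>v f)" unfolding B_delta3_def A_def ..
  moreover have "k2 psi = B @\<^sub>v ((psi \<bullet> D) \<cdot>\<^sub>v e0)" unfolding k2_def B_def ..
  ultimately have "del3 f + k2 psi = (A + B) @\<^sub>v (d2 *\<^sub>v f + (psi \<bullet> D) \<cdot>\<^sub>v e0)"
    unfolding A_def B_def using f by (simp add: append_vec_add[of _ n1 _ _ n1])
  moreover have "A + B = phi"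
  proof (rule eq_vecI)
    fix i assume "i < dim_vec phi"
    hence i: "i < n1" using phi by auto
    define x where "x = (unit_vec n1 i :: 'a vec)"
    have x: "x \<in> carrier_vec n1" unfolding x_def by simp
    let ?c = "(d1 *\<^sub>v x) $ 0"
    have "m12 x f = m12 x (m11 e0 e) + (phi \<bullet> e0) \<cdot>\<^sub>v m12 x D" unfolding fdef
      using lin_mapD(2,3)[OF L12a[OF x]] e by simp
    hence 1: "E (m12 x f) = E (m12 x (m11 e0 e)) + (phi \<bullet> e0) * ?c"
      using x e by (simp add: E_add E_smult m12D E_lamv)
    have "psi \<bullet> m11 e0 x = phi \<bullet> (d2 *\<^sub>v m11 e0 x) + E (m12 e (m11 e0 x))"
      unfolding psi_def phi_def e_def using R_del2[OF w] x by simp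
    also have "phi \<bullet> (d2 *\<^sub>v m11 e0 x) = phi \<bullet> x - ?c * (phi \<bullet> e0)"
      unfolding H1[OF x] using phi x by (simp add: scalar_prod_minus_distrib[of _ n1])
    finally have 2: "psi \<bullet> m11 e0 x = phi \<bullet> x - ?c * (phi \<bullet> e0) + E (m12 e (m11 e0 x))" .
    have 3: "E (m12 e (m11 e0 x)) + E (m12 x (m11 e0 e)) = 0"
      using P3[OF e x] e x by (simp add: E_add[symmetric] E_zero)
    have "(A + B) $ i = E (m12 x f) + psi \<bullet> m11 e0 x" unfolding A_def B_def x_def using i by simp
    also have "\<dots> = (E (m12 x (m11 e0 e)) + (phi \<bullet> e0) * ?c) + (phi \<bullet> x - ?c * (phi \<bullet> e0) + E (m12 e (m11 e0 x)))"
      by (simp only: 1 2)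
    also have "\<dots> = phi \<bullet> x + (E (m12 e (m11 e0 x)) + E (m12 x (m11 e0 e)))" by (rule ring_aux)
    also have "\<dots> = phi \<bullet> x" unfolding 3 by simp
    also have "\<dots> = phi $ i" unfolding x_def using i by simp
    finally show "(A + B) $ i = phi $ i" .
  qed (use phi in \<open>auto simp: A_def B_def\<close>)
  moreover have "d2 *\<^sub>v f + (psi \<bullet> D) \<cdot>\<^sub>v e0 = e"
  proof -
    have "d2 *\<^sub>v f = (e - (d1 *\<^sub>v e) $ 0 \<cdot>\<^sub>v e0) + (phi \<bullet> e0) \<cdot>\<^sub>v 0\<^sub>v n1" unfolding fdef
      using e by (simp add: mult_add_distrib_mat_vec[OF d2] mat_vec_smult_cr[OF d2] H1 d2D)
    thus ?thesis unfolding psiD using e by (intro eq_vecI) auto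
  qed
  ultimately have "del3 f + k2 psi = phi @\<^sub>v e" by simp
  thus ?thesis unfolding f_def psi_def using wapp by simp
qed

lemma C1: assumes w: "w \<in> carrier_vec (n1+n1)" shows "del1 (del2 w) = 0\<^sub>v nc"
proof (rule eq_vecI)
  fix k assume "k < dim_vec (0\<^sub>v nc :: 'a vec)"
  hence k: "k < nc" by simp
  have u: "iota *\<^sub>v unit_vec nc k \<in> carrier_vec n3" by simp
  have "del1 (del2 w) $ k = del2 w \<bullet> (d3 *\<^sub>v (iota *\<^sub>v unit_vec nc k))" unfolding B_delta1_def using k by simp
  also have "\<dots> = vec_first w n1 \<bullet> (d2 *\<^sub>v (d3 *\<^sub>v (iota *\<^sub>v unit_vec nc k)))
      + E (m12 (vec_last w n1) (d3 *\<^sub>v (iota *\<^sub>v unit_vec nc k)))" using R_del2[OF w] u by simp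
  also have "\<dots> = 0" using d2d3[OF u] P1[OF _ u, of "vec_last w n1"] E_smult[OF u] E_iota[of "unit_vec nc k"] by simp
  finally show "del1 (del2 w) $ k = 0\<^sub>v nc $ k" using k by simp
qed auto

lemma C2: assumes f: "f \<in> carrier_vec n2" shows "del2 (del3 f) = 0\<^sub>v n2"
proof (rule eq_vecI)
  fix j assume "j < dim_vec (0\<^sub>v n2 :: 'a vec)"
  hence j: "j < n2" by simp
  define g where "g = (unit_vec n2 j :: 'a vec)"
  have g: "g \<in> carrier_vec n2" unfolding g_def by simp
  have "del2 (del3 f) $ j = vec_first (del3 f) n1 \<bullet> (d2 *\<^sub>v g) + E (m12 (vec_last (del3 f) n1) g)"
    using del2_idx[OF j] unfolding g_def .
  also have "\<dots> = E (m12 (d2 *\<^sub>v g) f) + E (m12 (d2 *\<^sub>v f) g)"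
    unfolding del3_first del3_last[OF f] using R_del3a[OF f] g by simp
  also have "\<dots> = E (m12 (d2 *\<^sub>v g) f + m12 (d2 *\<^sub>v f) g)" using f g by (simp add: E_add)
  also have "\<dots> = 0" unfolding P2[OF f g] by (rule E_zero)
  finally show "del2 (del3 f) $ j = 0\<^sub>v n2 $ j" using j by simp
qed auto

lemma C3: assumes c: "c \<in> carrier_vec nc" shows "del3 (del4 c) = 0\<^sub>v (n1+n1)"
proof -
  have u: "iota *\<^sub>v c \<in> carrier_vec n3" using c by simp
  have A: "vec n1 (\<lambda>i. E (m12 (unit_vec n1 i) (d3 *\<^sub>v (iota *\<^sub>v c)))) = 0\<^sub>v n1"
    using P1[OF _ u] E_smult[OF u] E_iota[OF c] by (intro eq_vecI) auto
  have "del3 (del4 c) = 0\<^sub>v n1 @\<^sub>v 0\<^sub>v n1" unfolding B_delta3_def B_delta4_def A using d2d3[OF u] by simp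
  also have "\<dots> = 0\<^sub>v (n1+n1)" by (intro eq_vecI) auto
  finally show ?thesis .
qed


lemma first_add: "u \<in> carrier_vec (n+m) \<Longrightarrow> v \<in> carrier_vec (n+m) \<Longrightarrow> vec_first (u + v) n = vec_first u n + vec_first v n"
  unfolding vec_first_def by (intro eq_vecI) auto
lemma last_add: "u \<in> carrier_vec (n+m) \<Longrightarrow> v \<in> carrier_vec (n+m) \<Longrightarrow> vec_last (u + v) m = vec_last u m + vec_last v m"
  unfolding vec_last_def by (intro eq_vecI) auto
lemma first_smult: "u \<in> carrier_vec (n+m) \<Longrightarrow> vec_first (c \<cdot>\<^sub>v u) n = c \<cdot>\<^sub>v vec_first u n"
  unfolding vec_first_def by (intro eq_vecI) auto
lemma last_smult: "u \<in> carrier_vec (n+m) \<Longrightarrow> vec_last (c \<cdot>\<^sub>v u) m = c \<cdot>\<^sub>v vec_last u m"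
  unfolding vec_last_def by (intro eq_vecI) auto
lemma smult_append: "c \<cdot>\<^sub>v (a @\<^sub>v b) = (c \<cdot>\<^sub>v a) @\<^sub>v (c \<cdot>\<^sub>v b)"
  by (intro eq_vecI) auto

lemma lin_del1: "lin_map n2 nc del1"
  unfolding lin_map_def
proof (intro conjI ballI allI)
  fix u v :: "'a vec" assume u: "u \<in> carrier_vec n2" and v: "v \<in> carrier_vec n2"
  show "del1 (u + v) = del1 u + del1 v" unfolding B_delta1_def
    using u v by (intro eq_vecI) (auto simp: add_scalar_prod_distrib[of _ n2])
next
  fix c and v :: "'a vec" assume v: "v \<in> carrier_vec n2"
  show "del1 (c \<cdot>\<^sub>v v) = c \<cdot>\<^sub>v del1 v" unfolding B_delta1_def
    using v by (intro eq_vecI) auto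
qed simp

lemma lin_k1: "lin_map nc n2 k1"
  unfolding lin_map_def
proof (intro conjI ballI allI)
  fix u v :: "'a vec" assume u: "u \<in> carrier_vec nc" and v: "v \<in> carrier_vec nc"
  show "k1 (u + v) = k1 u + k1 v" unfolding k1_def
    using u v by (intro eq_vecI) (auto simp: add_scalar_prod_distrib[of _ nc])
next
  fix c and v :: "'a vec" assume v: "v \<in> carrier_vec nc"
  show "k1 (c \<cdot>\<^sub>v v) = c \<cdot>\<^sub>v k1 v" unfolding k1_def
    using v by (intro eq_vecI) auto
qed simp

lemma lin_del4: "lin_map nc n2 del4"
  unfolding B_delta4_def[abs_def] by (rule lin_d3i)

lemma lin_del2: "lin_map (n1+n1) n2 del2"
  unfolding lin_map_def
proof (intro conjI ballI allI)
  fix u v :: "'a vec" assume u: "u \<in> carrier_vec (n1+n1)" and v: "v \<in> carrier_vec (n1+n1)"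
  show "del2 (u + v) = del2 u + del2 v"
  proof (rule eq_vecI)
    fix j assume "j < dim_vec (del2 u + del2 v)"
    hence j: "j < n2" by simp
    have g: "unit_vec n2 j \<in> carrier_vec n2" by simp
    have "m12 (vec_last (u + v) n1) (unit_vec n2 j) = m12 (vec_last u n1) (unit_vec n2 j) + m12 (vec_last v n1) (unit_vec n2 j)"
      unfolding last_add[OF u v] using lin_mapD(2)[OF L12b[OF g]] by simp
    thus "del2 (u + v) $ j = (del2 u + del2 v) $ j"
      using j u v g unfolding del2_idx[OF j] first_add[OF u v]
      by (simp add: del2_idx add_scalar_prod_distrib[of _ n1] E_add)
  qed simp
next
  fix c and v :: "'a vec" assume v: "v \<in> carrier_vec (n1+n1)"
  show "del2 (c \<cdot>\<^sub>v v) = c \<cdot>\<^sub>v del2 v"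
  proof (rule eq_vecI)
    fix j assume "j < dim_vec (c \<cdot>\<^sub>v del2 v)"
    hence j: "j < n2" by simp
    have g: "unit_vec n2 j \<in> carrier_vec n2" by simp
    have "m12 (vec_last (c \<cdot>\<^sub>v v) n1) (unit_vec n2 j) = c \<cdot>\<^sub>v m12 (vec_last v n1) (unit_vec n2 j)"
      unfolding last_smult[OF v] using lin_mapD(3)[OF L12b[OF g]] by simp
    thus "del2 (c \<cdot>\<^sub>v v) $ j = (c \<cdot>\<^sub>v del2 v) $ j"
      using j v g unfolding del2_idx[OF j] first_smult[OF v]
      by (simp add: del2_idx E_smult distrib_left)
  qed simp
qed simp

lemma lin_del3: "lin_map n2 (n1+n1) del3"
  unfolding lin_map_def
proof (intro conjI ballI allI)
  fix v :: "'a vec" assume "v \<in> carrier_vec n2" thus "del3 v \<in> carrier_vec (n1+n1)" by simp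
next
  fix u v :: "'a vec" assume u: "u \<in> carrier_vec n2" and v: "v \<in> carrier_vec n2"
  have A: "vec n1 (\<lambda>i. E (m12 (unit_vec n1 i) (u + v))) = vec n1 (\<lambda>i. E (m12 (unit_vec n1 i) u)) + vec n1 (\<lambda>i. E (m12 (unit_vec n1 i) v))"
    using u v lin_mapD(2)[OF L12a] by (intro eq_vecI) (auto simp: E_add)
  show "del3 (u + v) = del3 u + del3 v" unfolding B_delta3_def
    using u v by (simp add: append_vec_add[of _ n1 _ _ n1] A mult_add_distrib_mat_vec[OF d2])
next
  fix c and v :: "'a vec" assume v: "v \<in> carrier_vec n2"
  have A: "vec n1 (\<lambda>i. E (m12 (unit_vec n1 i) (c \<cdot>\<^sub>v v))) = c \<cdot>\<^sub>v vec n1 (\<lambda>i. E (m12 (unit_vec n1 i) v))"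
    using v lin_mapD(3)[OF L12a] by (intro eq_vecI) (auto simp: E_smult)
  show "del3 (c \<cdot>\<^sub>v v) = c \<cdot>\<^sub>v del3 v" unfolding B_delta3_def
    using v by (simp add: smult_append A mat_vec_smult_cr[OF d2])
qed

lemma lin_k2: "lin_map n2 (n1+n1) k2"
  unfolding lin_map_def
proof (intro conjI ballI allI)
  fix u v :: "'a vec" assume u: "u \<in> carrier_vec n2" and v: "v \<in> carrier_vec n2"
  have A: "vec n1 (\<lambda>i. (u + v) \<bullet> m11 e0 (unit_vec n1 i)) = vec n1 (\<lambda>i. u \<bullet> m11 e0 (unit_vec n1 i)) + vec n1 (\<lambda>i. v \<bullet> m11 e0 (unit_vec n1 i))"
    using u v by (intro eq_vecI) (auto simp: add_scalar_prod_distrib[of _ n2])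
  have B: "((u + v) \<bullet> D) \<cdot>\<^sub>v e0 = (u \<bullet> D) \<cdot>\<^sub>v e0 + (v \<bullet> D) \<cdot>\<^sub>v e0"
    using u v by (simp add: add_scalar_prod_distrib[of _ n2] add_smult_distrib_vec)
  show "k2 (u + v) = k2 u + k2 v" unfolding k2_def
    using u v by (simp add: append_vec_add[of _ n1 _ _ n1] A B)
next
  fix c and v :: "'a vec" assume v: "v \<in> carrier_vec n2"
  have A: "vec n1 (\<lambda>i. (c \<cdot>\<^sub>v v) \<bullet> m11 e0 (unit_vec n1 i)) = c \<cdot>\<^sub>v vec n1 (\<lambda>i. v \<bullet> m11 e0 (unit_vec n1 i))"
    using v by (intro eq_vecI) auto
  have B: "((c \<cdot>\<^sub>v v) \<bullet> D) \<cdot>\<^sub>v e0 = c \<cdot>\<^sub>v ((v \<bullet> D) \<cdot>\<^sub>v e0)"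
    using v by (simp add: smult_smult_assoc)
  show "k2 (c \<cdot>\<^sub>v v) = c \<cdot>\<^sub>v k2 v"
    by (simp only: k2_def smult_append A B)
qed simp

lemma lin_k3: "lin_map (n1+n1) n2 k3"
  unfolding lin_map_def
proof (intro conjI ballI allI)
  fix u v :: "'a vec" assume u: "u \<in> carrier_vec (n1+n1)" and v: "v \<in> carrier_vec (n1+n1)"
  have 1: "m11 e0 (vec_last (u + v) n1) = m11 e0 (vec_last u n1) + m11 e0 (vec_last v n1)"
    unfolding last_add[OF u v] using lin_mapD(2)[OF L11a[OF e0]] by simp
  have 2: "vec_first (u + v) n1 \<bullet> e0 = vec_first u n1 \<bullet> e0 + vec_first v n1 \<bullet> e0"
    unfolding first_add[OF u v] by (simp add: add_scalar_prod_distrib[of _ n1])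
  show "k3 (u + v) = k3 u + k3 v" unfolding k3_def 1 2
    by (intro eq_vecI) (auto simp: distrib_right)
next
  fix c and v :: "'a vec" assume v: "v \<in> carrier_vec (n1+n1)"
  have 1: "m11 e0 (vec_last (c \<cdot>\<^sub>v v) n1) = c \<cdot>\<^sub>v m11 e0 (vec_last v n1)"
    unfolding last_smult[OF v] using lin_mapD(3)[OF L11a[OF e0]] by simp
  have 2: "vec_first (c \<cdot>\<^sub>v v) n1 \<bullet> e0 = c * (vec_first v n1 \<bullet> e0)"
    unfolding first_smult[OF v] by simp
  show "k3 (c \<cdot>\<^sub>v v) = c \<cdot>\<^sub>v k3 v" unfolding k3_def 1 2
    by (intro eq_vecI) (auto simp: distrib_left)
qed simp

theorem B_split: "split_exact [nc, n2, n1+n1, n2, nc] [del1, del2, del3, del4]"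
  by (rule homotopy_split_exact[OF lin_del1 lin_del2 lin_del3 lin_del4 lin_k1 lin_k2 lin_k3 lin_k4
      C1 C2 C3 K0 K1 K2 K3 K4])

end
theorem mainTheorem3:
  fixes p q :: nat
    and d1 d2 d3 :: "'a::comm_ring_1 mat"
    and m11 m12 :: "'a vec \<Rightarrow> 'a vec \<Rightarrow> 'a vec"
    and iota lam pr eta :: "'a mat"
  assumes noeth: "noetherian_ring TYPE('a)"
    and p: "p \<ge> 1" and q: "q \<ge> 3"
    and d1: "d1 \<in> carrier_mat 1 (p+2)"
    and d2: "d2 \<in> carrier_mat (p+2) (p+q)"
    and d3: "d3 \<in> carrier_mat (p+q) (q-1)"
    and cplx1: "d1 * d2 = 0\<^sub>m 1 (p+q)"
    and cplx2: "d2 * d3 = 0\<^sub>m (p+2) (q-1)"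
    and m11: "bilin_map (p+2) (p+2) (p+q) m11"
    and m12: "bilin_map (p+2) (p+q) (q-1) m12"
    and alt1: "\<forall>e\<in>carrier_vec (p+2). m11 e e = 0\<^sub>v (p+q)"
    and alt2: "\<forall>e\<in>carrier_vec (p+2). \<forall>e'\<in>carrier_vec (p+2). m11 e e' = - m11 e' e"
    and leib1: "\<forall>e\<in>carrier_vec (p+2). \<forall>e'\<in>carrier_vec (p+2).
       d2 *\<^sub>v m11 e e' = ((d1 *\<^sub>v e) $ 0) \<cdot>\<^sub>v e' - ((d1 *\<^sub>v e') $ 0) \<cdot>\<^sub>v e"
    and leib2: "\<forall>e\<in>carrier_vec (p+2). \<forall>f\<in>carrier_vec (p+q).
       d3 *\<^sub>v m12 e f = ((d1 *\<^sub>v e) $ 0) \<cdot>\<^sub>v f + m11 (d2 *\<^sub>v f) e"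
    and iota: "iota \<in> carrier_mat (q-1) (q-2)"
    and lam: "lam \<in> carrier_mat (q-1) 1"
    and pr: "pr \<in> carrier_mat (q-2) (q-1)"
    and eta: "eta \<in> carrier_mat 1 (q-1)"
    and dec1: "pr * iota = 1\<^sub>m (q-2)"
    and dec2: "eta * lam = 1\<^sub>m 1"
    and dec3: "pr * lam = 0\<^sub>m (q-2) 1"
    and dec4: "eta * iota = 0\<^sub>m 1 (q-2)"
    and dec5: "iota * pr + lam * eta = 1\<^sub>m (q-1)"
    and Asplit: "split_exact [1, p+2, p+q, q-1]
       [\<lambda>v. d1 *\<^sub>v v, \<lambda>v. d2 *\<^sub>v v, \<lambda>v. d3 *\<^sub>v v]"
  shows "split_exact [q-2, p+q, (p+2)+(p+2), p+q, q-2]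
       [B_delta1 (q-2) d3 iota, B_delta2 (p+2) (p+q) d2 eta m12,
        B_delta3 (p+2) d2 eta m12, B_delta4 d3 iota]"
  proof -
  have ex: "exact_seq [1, p+2, p+q, q-1] [\<lambda>v. d1 *\<^sub>v v, \<lambda>v. d2 *\<^sub>v v, \<lambda>v. d3 *\<^sub>v v]"
    using Asplit unfolding split_exact_def by simp
  hence EX: "\<forall>i<length [1, p+2, p+q, q-1]. \<forall>v\<in>carrier_vec ([1, p+2, p+q, q-1]!i).
          ((i = 0 \<or> ([\<lambda>v. d1 *\<^sub>v v, \<lambda>v. d2 *\<^sub>v v, \<lambda>v. d3 *\<^sub>v v]!(i-1)) v = 0\<^sub>v ([1, p+2, p+q, q-1]!(i-1))) \<longleftrightarrow>
           (if i < length [\<lambda>v. d1 *\<^sub>v v, \<lambda>v. d2 *\<^sub>v v, \<lambda>v. d3 *\<^sub>v v]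
            then (\<exists>u\<in>carrier_vec ([1, p+2, p+q, q-1]!(i+1)). ([\<lambda>v. d1 *\<^sub>v v, \<lambda>v. d2 *\<^sub>v v, \<lambda>v. d3 *\<^sub>v v]!i) u = v)
            else v = 0\<^sub>v ([1, p+2, p+q, q-1]!i)))"
    unfolding exact_seq_def by blast
  have "\<exists>u\<in>carrier_vec (p+2). d1 *\<^sub>v u = unit_vec 1 0"
    using EX[rule_format, of 0 "unit_vec 1 0"] by simp
  then obtain e0 where e0: "e0 \<in> carrier_vec (p+2)" and de0: "d1 *\<^sub>v e0 = unit_vec 1 0" by blast
  have d1e0: "(d1 *\<^sub>v e0) $ 0 = 1" unfolding de0 by simp
  have inj: "\<forall>x\<in>carrier_vec (q-1). d3 *\<^sub>v x = 0\<^sub>v (p+q) \<longrightarrow> x = 0\<^sub>v (q-1)"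
  proof (intro ballI impI)
    fix x :: "'a vec" assume x: "x \<in> carrier_vec (q-1)" and "d3 *\<^sub>v x = 0\<^sub>v (p+q)"
    thus "x = 0\<^sub>v (q-1)" using EX[rule_format, of 3 x] by simp
  qed
  have B: "bsetup (p+2) (p+q) (q-1) (q-2) d1 d2 d3 m11 m12 iota lam pr eta e0"
    by (unfold_locales; (rule d1 d2 d3 cplx1 cplx2 m11 m12 alt2 leib1 leib2 iota lam pr eta dec1 dec2 dec4 dec5 e0 d1e0 inj)?)
  show ?thesis using bsetup.B_split[OF B] .
qed

end
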